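(* Let $\mathcal{A}$ be an abelian category. (1) Let $M$ be a weak duo object of $\mathcal{A}$ having SSIP, and let $(N_i)_{i\in I}$ be a family of objects of $\mathcal{A}$ having a product. Then $\prod_{i\in I} N_i$ is strongly $M$-Rickart if and only if $N_i$ is strongly $M$-Rickart for every $i\in I$. (2) Let $(M_i)_{i\in I}$ be a family of objects of $\mathcal{A}$ having a coproduct, and let $N$ be a weak duo object of $\mathcal{A}$ having SSSP. Then $N$ is dual strongly $\bigoplus_{i\in I} M_i$-Rickart if and only if $N$ is dual strongly $M_i$-Rickart for every $i\in I$.
   Context: An object $M$ has the strong summand intersection property (SSIP) if the intersection of any family of direct summands of $M$ is a direct summand of $M$; it has the strong summand sum property (SSSP) if the sum of any family of direct summands of $M$ is a direct summand of $M$. A morphism $f:X\to Y$ is a section if $f'f=1_X$ for some $f'$, a retraction if $ff'=1_Y$ for some $f'$. A monomorphism $k:K\to X$ is fully invariant if for every $h:X\to X$ there is $\alpha:K\to K$ with $hk=k\alpha$; an epimorphism $c:X\to C$ is fully coinvariant if for every $h:X\to X$ there is $\gamma:C\to C$ with $ch=\gamma c$. An object is weak duo if every section into it is fully invariant (equivalently every retraction from it is fully coinvariant). $N$ is strongly $M$-Rickart if the kernel of every morphism $f:M\to N$ is a fully invariant section; $N$ is dual strongly $M$-Rickart if the cokernel of every morphism $f:M\to N$ is a fully coinvariant retraction (equivalently its image is a fully invariant section of $N$). *)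

theory Defs
  imports Main
begin

record ('o, 'm) category =
  Obj :: "'o set"
  Arr :: "'m set"
  Dom :: "'m \<Rightarrow> 'o"
  Cod :: "'m \<Rightarrow> 'o"
  cmp :: "'m \<Rightarrow> 'm \<Rightarrow> 'm"   (* cmp C g f = g \<circ> f *)
  idm :: "'o \<Rightarrow> 'm"

definition hom :: "('o,'m) category \<Rightarrow> 'o \<Rightarrow> 'o \<Rightarrow> 'm set" where
  "hom C X Y = {f \<in> Arr C. Dom C f = X \<and> Cod C f = Y}"

definition is_category :: "('o,'m) category \<Rightarrow> bool" where
  "is_category C \<longleftrightarrow>
     (\<forall>f \<in> Arr C. Dom C f \<in> Obj C \<and> Cod C f \<in> Obj C) \<and>
     (\<forall>X \<in> Obj C. idm C X \<in> hom C X X) \<and>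
     (\<forall>X Y Z f g. f \<in> hom C X Y \<longrightarrow> g \<in> hom C Y Z \<longrightarrow> cmp C g f \<in> hom C X Z) \<and>
     (\<forall>X Y f. f \<in> hom C X Y \<longrightarrow> cmp C f (idm C X) = f \<and> cmp C (idm C Y) f = f) \<and>
     (\<forall>W X Y Z f g h. f \<in> hom C W X \<longrightarrow> g \<in> hom C X Y \<longrightarrow> h \<in> hom C Y Z \<longrightarrow>
        cmp C h (cmp C g f) = cmp C (cmp C h g) f)"

definition monic :: "('o,'m) category \<Rightarrow> 'm \<Rightarrow> bool" where
  "monic C f \<longleftrightarrow> f \<in> Arr C \<and>
     (\<forall>W g h. g \<in> hom C W (Dom C f) \<longrightarrow> h \<in> hom C W (Dom C f) \<longrightarrow>
        cmp C f g = cmp C f h \<longrightarrow> g = h)"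

definition epic :: "('o,'m) category \<Rightarrow> 'm \<Rightarrow> bool" where
  "epic C f \<longleftrightarrow> f \<in> Arr C \<and>
     (\<forall>W g h. g \<in> hom C (Cod C f) W \<longrightarrow> h \<in> hom C (Cod C f) W \<longrightarrow>
        cmp C g f = cmp C h f \<longrightarrow> g = h)"

definition is_section :: "('o,'m) category \<Rightarrow> 'm \<Rightarrow> bool" where
  "is_section C f \<longleftrightarrow> f \<in> Arr C \<and>
     (\<exists>f' \<in> hom C (Cod C f) (Dom C f). cmp C f' f = idm C (Dom C f))"

definition is_retraction :: "('o,'m) category \<Rightarrow> 'm \<Rightarrow> bool" where
  "is_retraction C f \<longleftrightarrow> f \<in> Arr C \<and>
     (\<exists>f' \<in> hom C (Cod C f) (Dom C f). cmp C f f' = idm C (Cod C f))"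

definition zero_object :: "('o,'m) category \<Rightarrow> 'o \<Rightarrow> bool" where
  "zero_object C Z \<longleftrightarrow> Z \<in> Obj C \<and>
     (\<forall>X \<in> Obj C. (\<exists>!f. f \<in> hom C Z X) \<and> (\<exists>!f. f \<in> hom C X Z))"

definition zero_arrow :: "('o,'m) category \<Rightarrow> 'm \<Rightarrow> bool" where
  "zero_arrow C f \<longleftrightarrow> f \<in> Arr C \<and>
     (\<exists>Z a b. zero_object C Z \<and> a \<in> hom C (Dom C f) Z \<and> b \<in> hom C Z (Cod C f)
        \<and> f = cmp C b a)"

definition is_kernel :: "('o,'m) category \<Rightarrow> 'm \<Rightarrow> 'm \<Rightarrow> bool" where
  "is_kernel C f k \<longleftrightarrow> f \<in> Arr C \<and> k \<in> Arr C \<and> Cod C k = Dom C f \<and>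
     zero_arrow C (cmp C f k) \<and>
     (\<forall>g. g \<in> Arr C \<and> Cod C g = Dom C f \<and> zero_arrow C (cmp C f g) \<longrightarrow>
        (\<exists>!u. u \<in> hom C (Dom C g) (Dom C k) \<and> cmp C k u = g))"

definition is_cokernel :: "('o,'m) category \<Rightarrow> 'm \<Rightarrow> 'm \<Rightarrow> bool" where
  "is_cokernel C f c \<longleftrightarrow> f \<in> Arr C \<and> c \<in> Arr C \<and> Dom C c = Cod C f \<and>
     zero_arrow C (cmp C c f) \<and>
     (\<forall>g. g \<in> Arr C \<and> Dom C g = Cod C f \<and> zero_arrow C (cmp C g f) \<longrightarrow>
        (\<exists>!u. u \<in> hom C (Cod C c) (Cod C g) \<and> cmp C u c = g))"

definition is_product :: "('o,'m) category \<Rightarrow> 'i set \<Rightarrow> ('i \<Rightarrow> 'o) \<Rightarrow> 'o \<Rightarrow> ('i \<Rightarrow> 'm) \<Rightarrow> bool" where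
  "is_product C I N P p \<longleftrightarrow> P \<in> Obj C \<and> (\<forall>i \<in> I. p i \<in> hom C P (N i)) \<and>
     (\<forall>W q. W \<in> Obj C \<and> (\<forall>i \<in> I. q i \<in> hom C W (N i)) \<longrightarrow>
        (\<exists>!u. u \<in> hom C W P \<and> (\<forall>i \<in> I. cmp C (p i) u = q i)))"

definition is_coproduct :: "('o,'m) category \<Rightarrow> 'i set \<Rightarrow> ('i \<Rightarrow> 'o) \<Rightarrow> 'o \<Rightarrow> ('i \<Rightarrow> 'm) \<Rightarrow> bool" where
  "is_coproduct C I M S e \<longleftrightarrow> S \<in> Obj C \<and> (\<forall>i \<in> I. e i \<in> hom C (M i) S) \<and>
     (\<forall>W q. W \<in> Obj C \<and> (\<forall>i \<in> I. q i \<in> hom C (M i) W) \<longrightarrow>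
        (\<exists>!u. u \<in> hom C S W \<and> (\<forall>i \<in> I. cmp C u (e i) = q i)))"

text \<open>The additive structure is then uniquely determined.\<close>
definition abelian :: "('o,'m) category \<Rightarrow> bool" where
  "abelian C \<longleftrightarrow> is_category C \<and>
     (\<exists>Z. zero_object C Z) \<and>
     (\<forall>X \<in> Obj C. \<forall>Y \<in> Obj C.
        (\<exists>P p. is_product C (UNIV::bool set) (\<lambda>b. if b then X else Y) P p) \<and>
        (\<exists>S e. is_coproduct C (UNIV::bool set) (\<lambda>b. if b then X else Y) S e)) \<and>
     (\<forall>f \<in> Arr C. (\<exists>k. is_kernel C f k) \<and> (\<exists>c. is_cokernel C f c)) \<and>
     (\<forall>m. monic C m \<longrightarrow> (\<exists>f. is_kernel C f m)) \<and>
     (\<forall>e. epic C e \<longrightarrow> (\<exists>f. is_cokernel C f e))"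

definition fully_invariant :: "('o,'m) category \<Rightarrow> 'm \<Rightarrow> bool" where
  "fully_invariant C k \<longleftrightarrow> monic C k \<and>
     (\<forall>h \<in> hom C (Cod C k) (Cod C k). \<exists>\<alpha> \<in> hom C (Dom C k) (Dom C k).
        cmp C h k = cmp C k \<alpha>)"

definition fully_coinvariant :: "('o,'m) category \<Rightarrow> 'm \<Rightarrow> bool" where
  "fully_coinvariant C c \<longleftrightarrow> epic C c \<and>
     (\<forall>h \<in> hom C (Dom C c) (Dom C c). \<exists>\<gamma> \<in> hom C (Cod C c) (Cod C c).
        cmp C c h = cmp C \<gamma> c)"

definition weak_duo :: "('o,'m) category \<Rightarrow> 'o \<Rightarrow> bool" where
  "weak_duo C M \<longleftrightarrow> M \<in> Obj C \<and>
     (\<forall>s. is_section C s \<and> Cod C s = M \<longrightarrow> fully_invariant C s)"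

text \<open>A direct summand of M is represented by a section s : K \<rightarrow> M; a family of direct
  summands is a set F of such sections. d : D \<rightarrow> M is the intersection of the family
  (limit / meet of subobjects); u : U \<rightarrow> M is the sum (join of subobjects).\<close>
definition is_intersection :: "('o,'m) category \<Rightarrow> 'o \<Rightarrow> 'm set \<Rightarrow> 'm \<Rightarrow> bool" where
  "is_intersection C M F d \<longleftrightarrow> monic C d \<and> Cod C d = M \<and>
     (\<forall>s \<in> F. \<exists>t \<in> hom C (Dom C d) (Dom C s). cmp C s t = d) \<and>
     (\<forall>g. g \<in> Arr C \<and> Cod C g = M \<and>
          (\<forall>s \<in> F. \<exists>t \<in> hom C (Dom C g) (Dom C s). cmp C s t = g) \<longrightarrow>
        (\<exists>v \<in> hom C (Dom C g) (Dom C d). cmp C d v = g))"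

definition is_sum :: "('o,'m) category \<Rightarrow> 'o \<Rightarrow> 'm set \<Rightarrow> 'm \<Rightarrow> bool" where
  "is_sum C M F u \<longleftrightarrow> monic C u \<and> Cod C u = M \<and>
     (\<forall>s \<in> F. \<exists>t \<in> hom C (Dom C s) (Dom C u). cmp C u t = s) \<and>
     (\<forall>m. monic C m \<and> Cod C m = M \<and>
          (\<forall>s \<in> F. \<exists>t \<in> hom C (Dom C s) (Dom C m). cmp C m t = s) \<longrightarrow>
        (\<exists>v \<in> hom C (Dom C u) (Dom C m). cmp C m v = u))"

definition SSIP :: "('o,'m) category \<Rightarrow> 'o \<Rightarrow> bool" where
  "SSIP C M \<longleftrightarrow> M \<in> Obj C \<and>
     (\<forall>F. (\<forall>s \<in> F. is_section C s \<and> Cod C s = M) \<longrightarrow>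
        (\<exists>d. is_intersection C M F d \<and> is_section C d))"

definition SSSP :: "('o,'m) category \<Rightarrow> 'o \<Rightarrow> bool" where
  "SSSP C M \<longleftrightarrow> M \<in> Obj C \<and>
     (\<forall>F. (\<forall>s \<in> F. is_section C s \<and> Cod C s = M) \<longrightarrow>
        (\<exists>u. is_sum C M F u \<and> is_section C u))"

definition strongly_rickart :: "('o,'m) category \<Rightarrow> 'o \<Rightarrow> 'o \<Rightarrow> bool" where
  "strongly_rickart C M N \<longleftrightarrow>
     (\<forall>f \<in> hom C M N. \<forall>k. is_kernel C f k \<longrightarrow> is_section C k \<and> fully_invariant C k)"

definition dual_strongly_rickart :: "('o,'m) category \<Rightarrow> 'o \<Rightarrow> 'o \<Rightarrow> bool" where
  "dual_strongly_rickart C M N \<longleftrightarrow>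
     (\<forall>f \<in> hom C M N. \<forall>c. is_cokernel C f c \<longrightarrow> is_retraction C c \<and> fully_coinvariant C c)"

end

theory Submission
  imports Defs
begin


lemma homI: "f \<in> Arr C \<Longrightarrow> Dom C f = X \<Longrightarrow> Cod C f = Y \<Longrightarrow> f \<in> hom C X Y"
  by (simp add: hom_def)
lemma homD: "f \<in> hom C X Y \<Longrightarrow> f \<in> Arr C \<and> Dom C f = X \<and> Cod C f = Y"
  by (simp add: hom_def)
lemma hom_self: "f \<in> Arr C \<Longrightarrow> f \<in> hom C (Dom C f) (Cod C f)"
  by (simp add: hom_def)

lemma cat_comp: "is_category C \<Longrightarrow> f \<in> hom C X Y \<Longrightarrow> g \<in> hom C Y Z \<Longrightarrow> cmp C g f \<in> hom C X Z"
  unfolding is_category_def by blast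
lemma cat_id: "is_category C \<Longrightarrow> X \<in> Obj C \<Longrightarrow> idm C X \<in> hom C X X"
  unfolding is_category_def by blast
lemma cat_idr: "is_category C \<Longrightarrow> f \<in> hom C X Y \<Longrightarrow> cmp C f (idm C X) = f"
  unfolding is_category_def by blast
lemma cat_idl: "is_category C \<Longrightarrow> f \<in> hom C X Y \<Longrightarrow> cmp C (idm C Y) f = f"
  unfolding is_category_def by blast
lemma cat_assoc: "is_category C \<Longrightarrow> f \<in> hom C W X \<Longrightarrow> g \<in> hom C X Y \<Longrightarrow> h \<in> hom C Y Z \<Longrightarrow>
        cmp C h (cmp C g f) = cmp C (cmp C h g) f"
  unfolding is_category_def by blast
lemma cat_obj: "is_category C \<Longrightarrow> f \<in> Arr C \<Longrightarrow> Dom C f \<in> Obj C \<and> Cod C f \<in> Obj C"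
  unfolding is_category_def by blast
lemma cat_obj_hom: "is_category C \<Longrightarrow> f \<in> hom C X Y \<Longrightarrow> X \<in> Obj C \<and> Y \<in> Obj C"
  unfolding is_category_def hom_def by blast

section \<open>Opposite category\<close>

definition opc :: "('o,'m) category \<Rightarrow> ('o,'m) category" where
  "opc C = \<lparr>Obj = Obj C, Arr = Arr C, Dom = Cod C, Cod = Dom C, cmp = (\<lambda>g f. cmp C f g), idm = idm C\<rparr>"

lemma opc_simps[simp]: "Obj (opc C) = Obj C" "Arr (opc C) = Arr C" "Dom (opc C) = Cod C"
  "Cod (opc C) = Dom C" "cmp (opc C) g f = cmp C f g" "idm (opc C) = idm C"
  by (simp_all add: opc_def)

lemma hom_op[simp]: "hom (opc C) X Y = hom C Y X"
  by (auto simp: hom_def)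

lemma cat_op[simp]: "is_category (opc C) = is_category C"
proof
  assume c: "is_category (opc C)"
  show "is_category C" unfolding is_category_def
  proof (intro conjI allI impI ballI)
    fix f assume "f \<in> Arr C" thus "Dom C f \<in> Obj C" "Cod C f \<in> Obj C"
      using c unfolding is_category_def by auto
  next
    fix X assume "X \<in> Obj C" thus "idm C X \<in> hom C X X" using c unfolding is_category_def by auto
  next
    fix X Y Z f g assume "f \<in> hom C X Y" "g \<in> hom C Y Z" thus "cmp C g f \<in> hom C X Z"
      using c unfolding is_category_def by auto
  next
    fix X Y f assume "f \<in> hom C X Y" thus "cmp C f (idm C X) = f" "cmp C (idm C Y) f = f"
      using c unfolding is_category_def by auto
  next
    fix W X Y Z f g h assume "f \<in> hom C W X" "g \<in> hom C X Y" "h \<in> hom C Y Z"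
    thus "cmp C h (cmp C g f) = cmp C (cmp C h g) f"
      using c unfolding is_category_def by (metis hom_op opc_simps(5))
  qed
next
  assume c: "is_category C"
  show "is_category (opc C)" unfolding is_category_def
  proof (intro conjI allI impI ballI)
    fix f assume "f \<in> Arr (opc C)" thus "Dom (opc C) f \<in> Obj (opc C)" "Cod (opc C) f \<in> Obj (opc C)"
      using c unfolding is_category_def by auto
  next
    fix X assume "X \<in> Obj (opc C)" thus "idm (opc C) X \<in> hom (opc C) X X" using c unfolding is_category_def by auto
  next
    fix X Y Z f g assume "f \<in> hom (opc C) X Y" "g \<in> hom (opc C) Y Z" thus "cmp (opc C) g f \<in> hom (opc C) X Z"
      using c unfolding is_category_def by auto
  next
    fix X Y f assume "f \<in> hom (opc C) X Y" thus "cmp (opc C) f (idm (opc C) X) = f" "cmp (opc C) (idm (opc C) Y) f = f"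
      using c unfolding is_category_def by auto
  next
    fix W X Y Z f g h assume "f \<in> hom (opc C) W X" "g \<in> hom (opc C) X Y" "h \<in> hom (opc C) Y Z"
    thus "cmp (opc C) h (cmp (opc C) g f) = cmp (opc C) (cmp (opc C) h g) f"
      using c unfolding is_category_def by (metis hom_op opc_simps(5))
  qed
qed

lemma monic_op[simp]: "monic (opc C) f = epic C f"
  unfolding monic_def epic_def by simp
lemma epic_op[simp]: "epic (opc C) f = monic C f"
  unfolding monic_def epic_def by simp
lemma section_op[simp]: "is_section (opc C) f = is_retraction C f"
  unfolding is_section_def is_retraction_def by simp
lemma retraction_op[simp]: "is_retraction (opc C) f = is_section C f"
  unfolding is_section_def is_retraction_def by simp
lemma zero_object_op[simp]: "zero_object (opc C) Z = zero_object C Z"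
  unfolding zero_object_def by auto
lemma zero_arrow_op[simp]: "zero_arrow (opc C) f = zero_arrow C f"
  unfolding zero_arrow_def by auto
lemma kernel_op[simp]: "is_kernel (opc C) f k = is_cokernel C f k"
  unfolding is_kernel_def is_cokernel_def by simp
lemma cokernel_op[simp]: "is_cokernel (opc C) f k = is_kernel C f k"
  unfolding is_kernel_def is_cokernel_def by simp
lemma product_op[simp]: "is_product (opc C) I N P p = is_coproduct C I N P p"
  unfolding is_product_def is_coproduct_def by simp
lemma coproduct_op[simp]: "is_coproduct (opc C) I N P p = is_product C I N P p"
  unfolding is_product_def is_coproduct_def by simp
lemma kernel_op'[simp]: "is_kernel (opc C) f = is_cokernel C f"
  by (rule ext) simp
lemma cokernel_op'[simp]: "is_cokernel (opc C) f = is_kernel C f"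
  by (rule ext) simp
lemma product_op'[simp]: "is_product (opc C) I N P = is_coproduct C I N P"
  by (rule ext) simp
lemma coproduct_op'[simp]: "is_coproduct (opc C) I N P = is_product C I N P"
  by (rule ext) simp
lemma abelian_op[simp]: "abelian (opc C) = abelian C"
  unfolding abelian_def by auto
lemma fi_op[simp]: "fully_invariant (opc C) k = fully_coinvariant C k"
  unfolding fully_invariant_def fully_coinvariant_def by simp
lemma fc_op[simp]: "fully_coinvariant (opc C) k = fully_invariant C k"
  unfolding fully_invariant_def fully_coinvariant_def by simp
lemma sr_op[simp]: "strongly_rickart (opc C) M N = dual_strongly_rickart C N M"
  unfolding strongly_rickart_def dual_strongly_rickart_def by simp



lemma zero_arrowD: "zero_arrow C f \<Longrightarrow> f \<in> hom C (Dom C f) (Cod C f)"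
  unfolding zero_arrow_def hom_def by blast

lemma zero_comp_right:
  assumes c: "is_category C" and z: "zero_arrow C f" and g: "g \<in> hom C (Cod C f) Y"
  shows "zero_arrow C (cmp C g f)"
proof -
  obtain Z a b where Z: "zero_object C Z" and a: "a \<in> hom C (Dom C f) Z" and b: "b \<in> hom C Z (Cod C f)"
    and f: "f = cmp C b a" using z unfolding zero_arrow_def by blast
  have gb: "cmp C g b \<in> hom C Z Y" using cat_comp[OF c b g] .
  have gf: "cmp C g f \<in> hom C (Dom C f) Y" using cat_comp[OF c zero_arrowD[OF z] g] .
  have e: "cmp C g f = cmp C (cmp C g b) a" using f cat_assoc[OF c a b g] by simp
  have d: "Dom C (cmp C g f) = Dom C f" "Cod C (cmp C g f) = Y" using homD[OF gf] by auto
  show ?thesis unfolding zero_arrow_def d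
    apply (rule conjI) using homD[OF gf] apply simp
    apply (rule exI[of _ Z], rule exI[of _ a], rule exI[of _ "cmp C g b"])
    using Z a gb e by simp
qed

lemma zero_comp_left:
  assumes c: "is_category C" and z: "zero_arrow C f" and g: "g \<in> hom C X (Dom C f)"
  shows "zero_arrow C (cmp C f g)"
  using zero_comp_right[of "opc C" f g X] assms by simp

lemma zo_to: "zero_object C Z \<Longrightarrow> X \<in> Obj C \<Longrightarrow> f \<in> hom C X Z \<Longrightarrow> g \<in> hom C X Z \<Longrightarrow> f = g"
  unfolding zero_object_def by (metis (no_types, lifting))
lemma zo_from: "zero_object C Z \<Longrightarrow> X \<in> Obj C \<Longrightarrow> f \<in> hom C Z X \<Longrightarrow> g \<in> hom C Z X \<Longrightarrow> f = g"
  unfolding zero_object_def by (metis (no_types, lifting))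
lemma zo_ex_to: "zero_object C Z \<Longrightarrow> X \<in> Obj C \<Longrightarrow> \<exists>f. f \<in> hom C X Z"
  unfolding zero_object_def by (metis (no_types, lifting))
lemma zo_ex_from: "zero_object C Z \<Longrightarrow> X \<in> Obj C \<Longrightarrow> \<exists>f. f \<in> hom C Z X"
  unfolding zero_object_def by (metis (no_types, lifting))
lemma zo_obj: "zero_object C Z \<Longrightarrow> Z \<in> Obj C"
  unfolding zero_object_def by simp

lemma zero_unique:
  assumes c: "is_category C" and zf: "zero_arrow C f" and zg: "zero_arrow C g"
    and d: "Dom C f = Dom C g" and cd: "Cod C f = Cod C g"
  shows "f = g"
proof -
  obtain Z a b where Z: "zero_object C Z" and a: "a \<in> hom C (Dom C f) Z" and b: "b \<in> hom C Z (Cod C f)"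
    and f: "f = cmp C b a" using zf unfolding zero_arrow_def by blast
  obtain Z' a' b' where Z': "zero_object C Z'" and a': "a' \<in> hom C (Dom C f) Z'" and b': "b' \<in> hom C Z' (Cod C f)"
    and g: "g = cmp C b' a'" using zg d cd unfolding zero_arrow_def by auto
  have ZO: "Z \<in> Obj C" "Z' \<in> Obj C" using zo_obj[OF Z] zo_obj[OF Z'] by auto
  obtain \<phi> where ph: "\<phi> \<in> hom C Z Z'" using zo_ex_to[OF Z' ZO(1)] by blast
  have X: "Dom C f \<in> Obj C" "Cod C f \<in> Obj C" using cat_obj_hom[OF c a] cat_obj_hom[OF c b] by auto
  have pa: "cmp C \<phi> a \<in> hom C (Dom C f) Z'" using cat_comp[OF c a ph] .
  have bp: "cmp C b' \<phi> \<in> hom C Z (Cod C f)" using cat_comp[OF c ph b'] .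
  have e1: "a' = cmp C \<phi> a" using zo_to[OF Z' X(1) a' pa] .
  have e2: "b = cmp C b' \<phi>" using zo_from[OF Z X(2) b bp] .
  have "f = cmp C (cmp C b' \<phi>) a" using f e2 by simp
  also have "\<dots> = cmp C b' (cmp C \<phi> a)" using cat_assoc[OF c a ph b'] by simp
  also have "\<dots> = g" using g e1 by simp
  finally show ?thesis .
qed

lemma zero_exists:
  assumes c: "is_category C" and Z: "zero_object C Z" and X: "X \<in> Obj C" and Y: "Y \<in> Obj C"
  shows "\<exists>z \<in> hom C X Y. zero_arrow C z"
proof -
  obtain a where a: "a \<in> hom C X Z" using zo_ex_to[OF Z X] by blast
  obtain b where b: "b \<in> hom C Z Y" using zo_ex_from[OF Z Y] by blast
  have ba: "cmp C b a \<in> hom C X Y" using cat_comp[OF c a b] .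
  thus ?thesis unfolding zero_arrow_def using Z a b homD[OF ba] homD[OF a] by blast
qed

lemma abelian_cat: "abelian C \<Longrightarrow> is_category C" unfolding abelian_def by blast
lemma abelian_zero: "abelian C \<Longrightarrow> X \<in> Obj C \<Longrightarrow> Y \<in> Obj C \<Longrightarrow> \<exists>z \<in> hom C X Y. zero_arrow C z"
  unfolding abelian_def using zero_exists by metis
lemma abelian_ker: "abelian C \<Longrightarrow> f \<in> Arr C \<Longrightarrow> \<exists>k. is_kernel C f k"
  unfolding abelian_def by blast
lemma abelian_coker: "abelian C \<Longrightarrow> f \<in> Arr C \<Longrightarrow> \<exists>k. is_cokernel C f k"
  unfolding abelian_def by blast
lemma abelian_mono: "abelian C \<Longrightarrow> monic C m \<Longrightarrow> \<exists>f. is_kernel C f m"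
  unfolding abelian_def by blast
lemma abelian_epi: "abelian C \<Longrightarrow> epic C m \<Longrightarrow> \<exists>f. is_cokernel C f m"
  unfolding abelian_def by blast
lemma abelian_prod: "abelian C \<Longrightarrow> X \<in> Obj C \<Longrightarrow> Y \<in> Obj C \<Longrightarrow>
   \<exists>P p. is_product C (UNIV::bool set) (\<lambda>b. if b then X else Y) P p"
  unfolding abelian_def by blast

section \<open>Kernels\<close>

lemma ex1_uniq: "\<exists>!x. P x \<Longrightarrow> P a \<Longrightarrow> P b \<Longrightarrow> a = b" by blast

lemma kernel_ex1: "is_kernel C f k \<Longrightarrow> g \<in> Arr C \<Longrightarrow> Cod C g = Dom C f \<Longrightarrow> zero_arrow C (cmp C f g) \<Longrightarrow>
   \<exists>!u. u \<in> hom C (Dom C g) (Dom C k) \<and> cmp C k u = g"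
  unfolding is_kernel_def by simp

lemma kernel_arr: "is_kernel C f k \<Longrightarrow> k \<in> hom C (Dom C k) (Dom C f) \<and> f \<in> Arr C"
  unfolding is_kernel_def hom_def by auto

lemma kernel_factor:
  "is_kernel C f k \<Longrightarrow> g \<in> Arr C \<Longrightarrow> Cod C g = Dom C f \<Longrightarrow> zero_arrow C (cmp C f g) \<Longrightarrow>
   \<exists>u \<in> hom C (Dom C g) (Dom C k). cmp C k u = g"
  by (drule (3) kernel_ex1) (auto elim: ex1E)

lemma kernel_unique:
  "is_kernel C f k \<Longrightarrow> g \<in> Arr C \<Longrightarrow> Cod C g = Dom C f \<Longrightarrow> zero_arrow C (cmp C f g) \<Longrightarrow>
   u \<in> hom C (Dom C g) (Dom C k) \<Longrightarrow> cmp C k u = g \<Longrightarrow>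
   v \<in> hom C (Dom C g) (Dom C k) \<Longrightarrow> cmp C k v = g \<Longrightarrow> u = v"
  apply (drule (3) kernel_ex1) apply (erule ex1_uniq) by auto

lemma kernel_zero: "is_kernel C f k \<Longrightarrow> zero_arrow C (cmp C f k)"
  unfolding is_kernel_def by blast

lemma kernel_monic:
  assumes c: "is_category C" and k: "is_kernel C f k"
  shows "monic C k"
  unfolding monic_def
proof (intro conjI allI impI)
  show "k \<in> Arr C" using k unfolding is_kernel_def by blast
  fix W g h assume g: "g \<in> hom C W (Dom C k)" and h: "h \<in> hom C W (Dom C k)" and e: "cmp C k g = cmp C k h"
  have kh: "k \<in> hom C (Dom C k) (Dom C f)" "f \<in> hom C (Dom C f) (Cod C f)"
    using kernel_arr[OF k] hom_self by auto
  have kg: "cmp C k g \<in> hom C W (Dom C f)" using cat_comp[OF c g kh(1)] .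
  have fk: "cmp C f k \<in> hom C (Dom C k) (Cod C f)" using cat_comp[OF c kh(1) kh(2)] .
  have g': "g \<in> hom C W (Dom C (cmp C f k))" using g homD[OF fk] by simp
  have "zero_arrow C (cmp C (cmp C f k) g)"
    using zero_comp_left[OF c kernel_zero[OF k] g'] .
  hence "zero_arrow C (cmp C f (cmp C k g))"
    using cat_assoc[OF c g kh(1) kh(2)] by simp
  moreover have "cmp C k g \<in> Arr C" "Dom C (cmp C k g) = W" "Cod C (cmp C k g) = Dom C f"
    using homD[OF kg] by auto
  ultimately show "g = h" using kernel_unique[OF k, of "cmp C k g" g h] g h e by metis
qed

lemma cokernel_arr: "is_cokernel C f k \<Longrightarrow> k \<in> hom C (Cod C f) (Cod C k) \<and> f \<in> Arr C"
  using kernel_arr[of "opc C" f k] by simp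
lemma cokernel_factor:
  "is_cokernel C f k \<Longrightarrow> g \<in> Arr C \<Longrightarrow> Dom C g = Cod C f \<Longrightarrow> zero_arrow C (cmp C g f) \<Longrightarrow>
   \<exists>u \<in> hom C (Cod C k) (Cod C g). cmp C u k = g"
  using kernel_factor[of "opc C" f k g] by simp
lemma cokernel_zero: "is_cokernel C f k \<Longrightarrow> zero_arrow C (cmp C k f)"
  using kernel_zero[of "opc C" f k] by simp
lemma cokernel_epic: "is_category C \<Longrightarrow> is_cokernel C f k \<Longrightarrow> epic C k"
  using kernel_monic[of "opc C" f k] by simp



lemma cmpD: "is_category C \<Longrightarrow> f \<in> hom C X Y \<Longrightarrow> g \<in> hom C Y Z \<Longrightarrow>
   cmp C g f \<in> Arr C \<and> Dom C (cmp C g f) = X \<and> Cod C (cmp C g f) = Z"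
  by (rule homD, rule cat_comp)

lemma section_monic:
  assumes c: "is_category C" and s: "s \<in> hom C X Y" and s': "s' \<in> hom C Y X" and e: "cmp C s' s = idm C X"
  shows "monic C s"
  unfolding monic_def
proof (intro conjI allI impI)
  show "s \<in> Arr C" using homD[OF s] by simp
  fix W g h assume g: "g \<in> hom C W (Dom C s)" and h: "h \<in> hom C W (Dom C s)" and gh: "cmp C s g = cmp C s h"
  have g': "g \<in> hom C W X" and h': "h \<in> hom C W X" using g h homD[OF s] by auto
  have "g = cmp C (cmp C s' s) g" using e cat_idl[OF c g'] by simp
  also have "\<dots> = cmp C s' (cmp C s g)" using cat_assoc[OF c g' s s'] by simp
  also have "\<dots> = cmp C s' (cmp C s h)" using gh by simp
  also have "\<dots> = cmp C (cmp C s' s) h" using cat_assoc[OF c h' s s'] by simp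
  also have "\<dots> = h" using e cat_idl[OF c h'] by simp
  finally show "g = h" .
qed

lemma retraction_epic:
  assumes c: "is_category C" and s: "s \<in> hom C Y X" and s': "s' \<in> hom C X Y" and e: "cmp C s s' = idm C X"
  shows "epic C s"
  using section_monic[of "opc C" s X Y s'] assms by simp

lemma is_section_D: "is_section C s \<Longrightarrow> \<exists>s' \<in> hom C (Cod C s) (Dom C s). cmp C s' s = idm C (Dom C s)"
  unfolding is_section_def by blast
lemma is_section_monic: "is_category C \<Longrightarrow> is_section C s \<Longrightarrow> monic C s"
proof -
  assume c: "is_category C" and s: "is_section C s"
  obtain s' where s': "s' \<in> hom C (Cod C s) (Dom C s)" "cmp C s' s = idm C (Dom C s)"
    using is_section_D[OF s] by blast
  have "s \<in> Arr C" using s unfolding is_section_def by simp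
  hence "s \<in> hom C (Dom C s) (Cod C s)" by (rule hom_self)
  thus ?thesis using section_monic[OF c _ s'(1) s'(2)] by blast
qed
lemma is_retraction_epic: "is_category C \<Longrightarrow> is_retraction C s \<Longrightarrow> epic C s"
  using is_section_monic[of "opc C" s] by simp

lemma monicD: "monic C f \<Longrightarrow> g \<in> hom C W (Dom C f) \<Longrightarrow> h \<in> hom C W (Dom C f) \<Longrightarrow> cmp C f g = cmp C f h \<Longrightarrow> g = h"
  unfolding monic_def by blast
lemma epicD: "epic C f \<Longrightarrow> g \<in> hom C (Cod C f) W \<Longrightarrow> h \<in> hom C (Cod C f) W \<Longrightarrow> cmp C g f = cmp C h f \<Longrightarrow> g = h"
  unfolding epic_def by blast
lemma monic_arr: "monic C f \<Longrightarrow> f \<in> Arr C" unfolding monic_def by blast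

lemma ker_of_zero_split:
  assumes c: "is_category C" and k: "is_kernel C h k" and z: "zero_arrow C h"
  shows "\<exists>u \<in> hom C (Dom C h) (Dom C k). cmp C k u = idm C (Dom C h)"
proof -
  have h: "h \<in> hom C (Dom C h) (Cod C h)" using zero_arrowD[OF z] .
  have O: "Dom C h \<in> Obj C" using cat_obj_hom[OF c h] by simp
  have i: "idm C (Dom C h) \<in> hom C (Dom C h) (Dom C h)" using cat_id[OF c O] .
  have "zero_arrow C (cmp C h (idm C (Dom C h)))" using cat_idr[OF c h] z by simp
  from kernel_factor[OF k _ _ this] homD[OF i] show ?thesis by simp
qed

lemma mono_epi_iso:
  assumes a: "abelian C" and m: "monic C f" and ep: "epic C f"
  shows "\<exists>v \<in> hom C (Cod C f) (Dom C f). cmp C v f = idm C (Dom C f) \<and> cmp C f v = idm C (Cod C f)"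
proof -
  have c: "is_category C" using abelian_cat[OF a] .
  obtain h where k: "is_kernel C h f" using abelian_mono[OF a m] by blast
  have f: "f \<in> hom C (Dom C f) (Dom C h)" and hA: "h \<in> Arr C" using kernel_arr[OF k] by auto
  have hh: "h \<in> hom C (Cod C f) (Cod C h)" using hom_self[OF hA] homD[OF f] by simp
  have O: "Cod C f \<in> Obj C" "Cod C h \<in> Obj C" "Dom C f \<in> Obj C" using cat_obj_hom[OF c hh] cat_obj_hom[OF c f] by auto
  obtain z where zh: "z \<in> hom C (Cod C f) (Cod C h)" and zz: "zero_arrow C z" using abelian_zero[OF a O(1) O(2)] by blast
  have f2: "f \<in> hom C (Dom C f) (Dom C z)" using homD[OF zh] f homD[OF hh] by simp
  have z1: "zero_arrow C (cmp C z f)" using zero_comp_left[OF c zz f2] .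
  have z2: "zero_arrow C (cmp C h f)" using kernel_zero[OF k] .
  have f': "f \<in> hom C (Dom C f) (Cod C f)" using hom_self[OF monic_arr[OF m]] .
  have "cmp C h f = cmp C z f" using zero_unique[OF c z2 z1] cmpD[OF c f' zh] cmpD[OF c f' hh] by simp
  hence "h = z" using epicD[OF ep hh zh] by simp
  hence zh': "zero_arrow C h" using zz by simp
  obtain u where u: "u \<in> hom C (Dom C h) (Dom C f)" and fu: "cmp C f u = idm C (Dom C h)"
    using ker_of_zero_split[OF c k zh'] by blast
  have DC: "Dom C h = Cod C f" using homD[OF hh] by simp
  have u': "u \<in> hom C (Cod C f) (Dom C f)" using u DC by simp
  have uf: "cmp C u f \<in> hom C (Dom C f) (Dom C f)" using cat_comp[OF c f' u'] .
  have i: "idm C (Dom C f) \<in> hom C (Dom C f) (Dom C f)" using cat_id[OF c O(3)] .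
  have "cmp C f (cmp C u f) = cmp C (cmp C f u) f" using cat_assoc[OF c f' u' f'] .
  also have "\<dots> = f" using fu DC cat_idl[OF c f'] by simp
  also have "\<dots> = cmp C f (idm C (Dom C f))" using cat_idr[OF c f'] by simp
  finally have "cmp C u f = idm C (Dom C f)" using monicD[OF m uf i] by simp
  thus ?thesis using u' fu DC by (intro bexI[of _ u]) simp_all
qed



lemma prod_proj: "is_product C I N P p \<Longrightarrow> i \<in> I \<Longrightarrow> p i \<in> hom C P (N i)"
  unfolding is_product_def by simp
lemma prod_obj: "is_product C I N P p \<Longrightarrow> P \<in> Obj C"
  unfolding is_product_def by simp
lemma prod_ex1: "is_product C I N P p \<Longrightarrow> W \<in> Obj C \<Longrightarrow> (\<forall>i \<in> I. q i \<in> hom C W (N i)) \<Longrightarrow>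
   \<exists>!u. u \<in> hom C W P \<and> (\<forall>i \<in> I. cmp C (p i) u = q i)"
  unfolding is_product_def by simp
lemma prod_ex: "is_product C I N P p \<Longrightarrow> W \<in> Obj C \<Longrightarrow> (\<forall>i \<in> I. q i \<in> hom C W (N i)) \<Longrightarrow>
   \<exists>u. u \<in> hom C W P \<and> (\<forall>i \<in> I. cmp C (p i) u = q i)"
  by (drule (2) prod_ex1) (erule ex1E, rule exI)
lemma prod_uniq:
  assumes c: "is_category C" and P: "is_product C I N P p" and W: "W \<in> Obj C"
    and u: "u \<in> hom C W P" and u': "u' \<in> hom C W P" and e: "\<forall>i \<in> I. cmp C (p i) u = cmp C (p i) u'"
  shows "u = u'"
proof -
  have "\<forall>i \<in> I. cmp C (p i) u \<in> hom C W (N i)" using cat_comp[OF c u prod_proj[OF P]] by simp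
  from prod_ex1[OF P W this] show ?thesis
    apply (rule ex1_uniq) using u u' e by simp_all
qed

lemma coprod_inj: "is_coproduct C I N P p \<Longrightarrow> i \<in> I \<Longrightarrow> p i \<in> hom C (N i) P"
  using prod_proj[of "opc C" I N P p] by simp
lemma coprod_ex: "is_coproduct C I N P p \<Longrightarrow> W \<in> Obj C \<Longrightarrow> (\<forall>i \<in> I. q i \<in> hom C (N i) W) \<Longrightarrow>
   \<exists>u. u \<in> hom C P W \<and> (\<forall>i \<in> I. cmp C u (p i) = q i)"
  using prod_ex[of "opc C" I N P p W q] by simp
lemma coprod_uniq:
  "is_category C \<Longrightarrow> is_coproduct C I N P p \<Longrightarrow> W \<in> Obj C \<Longrightarrow> u \<in> hom C P W \<Longrightarrow> u' \<in> hom C P W \<Longrightarrow>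
   \<forall>i \<in> I. cmp C u (p i) = cmp C u' (p i) \<Longrightarrow> u = u'"
  using prod_uniq[of "opc C" I N P p W u u'] by simp

lemma mono_ker_coker:
  assumes a: "abelian C" and m: "monic C r" and g: "is_cokernel C r g"
  shows "is_kernel C g r"
proof -
  have c: "is_category C" using abelian_cat[OF a] .
  obtain g0 where k0: "is_kernel C g0 r" using abelian_mono[OF a m] by blast
  have rr: "r \<in> hom C (Dom C r) (Cod C r)" using hom_self[OF monic_arr[OF m]] .
  have gg: "g \<in> hom C (Cod C r) (Cod C g)" and g0r: "Dom C g0 = Cod C r" and g0A: "g0 \<in> Arr C"
    using cokernel_arr[OF g] kernel_arr[OF k0] kernel_arr[OF k0, THEN conjunct1, THEN homD] by auto
  obtain w where w: "w \<in> hom C (Cod C g) (Cod C g0)" and wg: "cmp C w g = g0"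
    using cokernel_factor[OF g g0A g0r kernel_zero[OF k0]] by blast
  show ?thesis unfolding is_kernel_def
  proof (intro conjI allI impI)
    show "g \<in> Arr C" "r \<in> Arr C" "Cod C r = Dom C g" "zero_arrow C (cmp C g r)"
      using homD[OF gg] homD[OF rr] cokernel_zero[OF g] by auto
    fix h assume h: "h \<in> Arr C \<and> Cod C h = Dom C g \<and> zero_arrow C (cmp C g h)"
    have hh: "h \<in> hom C (Dom C h) (Cod C r)" using h homD[OF gg] hom_self by metis
    have "cmp C g0 h = cmp C w (cmp C g h)" using cat_assoc[OF c hh gg w] wg by simp
    moreover have "zero_arrow C (cmp C w (cmp C g h))"
      using zero_comp_right[OF c conjunct2[OF conjunct2[OF h]]] cmpD[OF c hh gg] w by simp
    ultimately have "zero_arrow C (cmp C g0 h)" by simp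
    then obtain u where u: "u \<in> hom C (Dom C h) (Dom C r)" "cmp C r u = h"
      using kernel_factor[OF k0, of h] h g0r homD[OF hh] by auto
    show "\<exists>!u. u \<in> hom C (Dom C h) (Dom C r) \<and> cmp C r u = h"
    proof (rule ex1I[of _ u])
      show "u \<in> hom C (Dom C h) (Dom C r) \<and> cmp C r u = h" using u by simp
      fix v assume "v \<in> hom C (Dom C h) (Dom C r) \<and> cmp C r v = h"
      thus "v = u" using monicD[OF m, of v "Dom C h" u] u by simp
    qed
  qed
qed

lemma epi_coker_ker:
  "abelian C \<Longrightarrow> epic C c \<Longrightarrow> is_kernel C c m \<Longrightarrow> is_cokernel C m c"
  using mono_ker_coker[of "opc C" c m] by simp



lemma equalizer:
  assumes a: "abelian C" and x: "x \<in> hom C X Y" and y: "y \<in> hom C X Y"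
  shows "\<exists>e. monic C e \<and> Cod C e = X \<and> cmp C x e = cmp C y e \<and>
     (\<forall>h. h \<in> Arr C \<and> Cod C h = X \<and> cmp C x h = cmp C y h \<longrightarrow> (\<exists>v \<in> hom C (Dom C h) (Dom C e). cmp C e v = h))"
proof -
  have c: "is_category C" using abelian_cat[OF a] .
  have OX: "X \<in> Obj C" and OY: "Y \<in> Obj C" using cat_obj_hom[OF c x] by auto
  obtain P p where P0: "is_product C (UNIV::bool set) (\<lambda>b. if b then Y else Y) P p"
    using abelian_prod[OF a OY OY] by blast
  have P: "is_product C (UNIV::bool set) (\<lambda>b. Y) P p" using P0 by simp
  have pb: "\<And>b. p b \<in> hom C P Y" using prod_proj[OF P] by simp
  obtain \<delta> where d: "\<delta> \<in> hom C Y P" and pd: "\<forall>b \<in> UNIV. cmp C (p b) \<delta> = idm C Y"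
    using prod_ex[OF P OY, of "\<lambda>b. idm C Y"] cat_id[OF c OY] by auto
  have dm: "monic C \<delta>" using section_monic[OF c d pb[of True]] pd by simp
  obtain g0 where g0: "is_kernel C g0 \<delta>" using abelian_mono[OF a dm] by blast
  have g0h: "g0 \<in> hom C P (Cod C g0)" using kernel_arr[OF g0] homD[OF d] hom_self
    kernel_arr[OF g0, THEN conjunct1, THEN homD] by metis
  obtain w where w: "w \<in> hom C X P" and pw: "\<forall>b \<in> UNIV. cmp C (p b) w = (if b then x else y)"
  proof -
    have "\<forall>i \<in> UNIV. (if i then x else y) \<in> hom C X Y" using x y by simp
    from prod_ex[OF P OX this] show ?thesis using that by blast
  qed
  have gw: "cmp C g0 w \<in> hom C X (Cod C g0)" using cat_comp[OF c w g0h] .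
  obtain e where e: "is_kernel C (cmp C g0 w) e" using abelian_ker[OF a] homD[OF gw] by blast
  have eh: "e \<in> hom C (Dom C e) X" using kernel_arr[OF e] homD[OF gw] by simp
  have em: "monic C e" using kernel_monic[OF c e] .
  have we: "cmp C w e \<in> hom C (Dom C e) P" using cat_comp[OF c eh w] .
  have "zero_arrow C (cmp C (cmp C g0 w) e)" using kernel_zero[OF e] .
  hence "zero_arrow C (cmp C g0 (cmp C w e))" using cat_assoc[OF c eh w g0h] by simp
  then obtain t where t: "t \<in> hom C (Dom C e) Y" and dt: "cmp C \<delta> t = cmp C w e"
    using kernel_factor[OF g0, of "cmp C w e"] homD[OF we] homD[OF g0h] homD[OF d] by auto
  have xe: "\<And>b. cmp C (if b then x else y) e = t"
  proof -
    fix b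
    have "cmp C (if b then x else y) e = cmp C (cmp C (p b) w) e" using pw by simp
    also have "\<dots> = cmp C (p b) (cmp C w e)" using cat_assoc[OF c eh w pb] by simp
    also have "\<dots> = cmp C (p b) (cmp C \<delta> t)" using dt by simp
    also have "\<dots> = cmp C (cmp C (p b) \<delta>) t" using cat_assoc[OF c t d pb] by simp
    also have "\<dots> = t" using pd cat_idl[OF c t] by simp
    finally show "cmp C (if b then x else y) e = t" .
  qed
  have xye: "cmp C x e = cmp C y e" using xe[of True] xe[of False] by simp
  have univ: "\<forall>h. h \<in> Arr C \<and> Cod C h = X \<and> cmp C x h = cmp C y h \<longrightarrow> (\<exists>v \<in> hom C (Dom C h) (Dom C e). cmp C e v = h)"
  proof (intro allI impI)
    fix h assume h: "h \<in> Arr C \<and> Cod C h = X \<and> cmp C x h = cmp C y h"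
    have hh: "h \<in> hom C (Dom C h) X" using h hom_self by metis
    have OH: "Dom C h \<in> Obj C" using cat_obj_hom[OF c hh] by simp
    have xh: "cmp C x h \<in> hom C (Dom C h) Y" using cat_comp[OF c hh x] .
    have wh: "cmp C w h \<in> hom C (Dom C h) P" using cat_comp[OF c hh w] .
    have dxh: "cmp C \<delta> (cmp C x h) \<in> hom C (Dom C h) P" using cat_comp[OF c xh d] .
    have "\<forall>b \<in> UNIV. cmp C (p b) (cmp C w h) = cmp C (p b) (cmp C \<delta> (cmp C x h))"
    proof
      fix b :: bool
      have "cmp C (p b) (cmp C w h) = cmp C (cmp C (p b) w) h" using cat_assoc[OF c hh w pb] by simp
      also have "\<dots> = cmp C x h" using pw h by (cases b) auto
      also have "\<dots> = cmp C (cmp C (p b) \<delta>) (cmp C x h)" using pd cat_idl[OF c xh] by simp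
      also have "\<dots> = cmp C (p b) (cmp C \<delta> (cmp C x h))" using cat_assoc[OF c xh d pb] by simp
      finally show "cmp C (p b) (cmp C w h) = cmp C (p b) (cmp C \<delta> (cmp C x h))" .
    qed
    hence whe: "cmp C w h = cmp C \<delta> (cmp C x h)" using prod_uniq[OF c P OH wh dxh] by blast
    have "cmp C (cmp C g0 w) h = cmp C g0 (cmp C w h)" using cat_assoc[OF c hh w g0h] by simp
    also have "\<dots> = cmp C (cmp C g0 \<delta>) (cmp C x h)" using whe cat_assoc[OF c xh d g0h] by simp
    finally have "zero_arrow C (cmp C (cmp C g0 w) h)"
      using zero_comp_left[OF c kernel_zero[OF g0], of "cmp C x h"] xh cmpD[OF c d g0h] by simp
    thus "\<exists>v \<in> hom C (Dom C h) (Dom C e). cmp C e v = h"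
      using kernel_factor[OF e, of h] h homD[OF gw] by simp
  qed
  show ?thesis using em homD[OF eh] xye univ by (intro exI[of _ e]) simp
qed



lemma jointly_epic:
  assumes a: "abelian C" and mc: "is_cokernel C m c" and r: "r \<in> hom C (Cod C c) (Dom C c)"
    and cr: "cmp C c r = idm C (Cod C c)"
    and x: "x \<in> hom C (Dom C c) Y" and y: "y \<in> hom C (Dom C c) Y"
    and xm: "cmp C x m = cmp C y m" and xr: "cmp C x r = cmp C y r"
  shows "x = y"
proof -
  have c: "is_category C" using abelian_cat[OF a] .
  have ch: "c \<in> hom C (Dom C c) (Cod C c)" using cokernel_arr[OF mc] homD by metis
  have mA: "m \<in> Arr C" and Cm: "Cod C m = Dom C c" using cokernel_arr[OF mc] homD by metis+
  have mh: "m \<in> hom C (Dom C m) (Dom C c)" using hom_self[OF mA] Cm by simp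
  obtain e where em: "monic C e" and Ce: "Cod C e = Dom C c" and xye: "cmp C x e = cmp C y e"
    and univ: "\<forall>h. h \<in> Arr C \<and> Cod C h = Dom C c \<and> cmp C x h = cmp C y h \<longrightarrow> (\<exists>v \<in> hom C (Dom C h) (Dom C e). cmp C e v = h)"
    using equalizer[OF a x y] by blast
  have eh: "e \<in> hom C (Dom C e) (Dom C c)" using hom_self[OF monic_arr[OF em]] Ce by simp
  obtain m1 where m1: "m1 \<in> hom C (Dom C m) (Dom C e)" and em1: "cmp C e m1 = m"
    using univ mA Cm xm by blast
  have rA: "r \<in> Arr C" "Cod C r = Dom C c" "Dom C r = Cod C c" using homD[OF r] by auto
  obtain r1 where r1: "r1 \<in> hom C (Cod C c) (Dom C e)" and er1: "cmp C e r1 = r"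
    using univ rA xr by metis
  obtain g' where g': "is_kernel C g' e" using abelian_mono[OF a em] by blast
  have g'h: "g' \<in> hom C (Dom C c) (Cod C g')" using kernel_arr[OF g'] hom_self
    kernel_arr[OF g', THEN conjunct1, THEN homD] Ce by metis
  have zge: "zero_arrow C (cmp C g' e)" using kernel_zero[OF g'] .
  have Dge: "Dom C (cmp C g' e) = Dom C e" using cmpD[OF c eh g'h] by simp
  have "cmp C g' m = cmp C (cmp C g' e) m1" using em1 cat_assoc[OF c m1 eh g'h] by simp
  hence z1: "zero_arrow C (cmp C g' m)" using zero_comp_left[OF c zge, of m1] m1 Dge by simp
  obtain w where w: "w \<in> hom C (Cod C c) (Cod C g')" and wc: "cmp C w c = g'"
    using cokernel_factor[OF mc _ _ z1] homD[OF g'h] Cm by metis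
  have "cmp C g' r = cmp C (cmp C g' e) r1" using er1 cat_assoc[OF c r1 eh g'h] by simp
  hence z2: "zero_arrow C (cmp C g' r)" using zero_comp_left[OF c zge, of r1] r1 Dge by simp
  have "cmp C g' r = cmp C w (cmp C c r)" using wc cat_assoc[OF c r ch w] by simp
  also have "\<dots> = w" using cr cat_idr[OF c w] by simp
  finally have zw: "zero_arrow C w" using z2 by simp
  have "zero_arrow C g'" using zero_comp_left[OF c zw, of c] wc ch homD[OF w] by simp
  from ker_of_zero_split[OF c g' this] obtain u where u: "u \<in> hom C (Dom C c) (Dom C e)"
    and eu: "cmp C e u = idm C (Dom C c)" using homD[OF g'h] by auto
  have "x = cmp C x (cmp C e u)" using eu cat_idr[OF c x] by simp
  also have "\<dots> = cmp C (cmp C x e) u" using cat_assoc[OF c u eh x] by simp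
  also have "\<dots> = cmp C (cmp C y e) u" using xye by simp
  also have "\<dots> = cmp C y (cmp C e u)" using cat_assoc[OF c u eh y] by simp
  also have "\<dots> = y" using eu cat_idr[OF c y] by simp
  finally show ?thesis .
qed

lemma jointly_monic:
  assumes a: "abelian C" and mc: "is_kernel C m c" and r: "r \<in> hom C (Cod C c) (Dom C c)"
    and cr: "cmp C r c = idm C (Dom C c)"
    and x: "x \<in> hom C Y (Cod C c)" and y: "y \<in> hom C Y (Cod C c)"
    and xm: "cmp C m x = cmp C m y" and xr: "cmp C r x = cmp C r y"
  shows "x = y"
  using jointly_epic[of "opc C" m c r x Y y] assms by simp



lemma split_kernel_section:
  assumes a: "abelian C" and ch: "c \<in> hom C N Q" and r: "r \<in> hom C Q N" and cr: "cmp C c r = idm C Q"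
    and k: "is_kernel C c m"
  shows "is_section C m"
proof -
  have cat: "is_category C" using abelian_cat[OF a] .
  have cep: "epic C c" using retraction_epic[OF cat ch r cr] .
  have mc: "is_cokernel C m c" using epi_coker_ker[OF a cep k] .
  have DN: "Dom C c = N" "Cod C c = Q" using homD[OF ch] by auto
  have mh: "m \<in> hom C (Dom C m) N" using kernel_arr[OF k] DN by simp
  have rm: "monic C r" using section_monic[OF cat r ch cr] .
  obtain g where g: "is_cokernel C r g" using abelian_coker[OF a] homD[OF r] by blast
  have gk: "is_kernel C g r" using mono_ker_coker[OF a rm g] .
  have gep: "epic C g" using cokernel_epic[OF cat g] .
  have gh: "g \<in> hom C N (Cod C g)" using cokernel_arr[OF g] homD[OF r] by simp
  have gm: "cmp C g m \<in> hom C (Dom C m) (Cod C g)" using cat_comp[OF cat mh gh] .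
  have gmep: "epic C (cmp C g m)" unfolding epic_def
  proof (intro conjI allI impI)
    show "cmp C g m \<in> Arr C" using homD[OF gm] by simp
    fix W a' b' assume as1: "a' \<in> hom C (Cod C (cmp C g m)) W" and as2: "b' \<in> hom C (Cod C (cmp C g m)) W"
      and as: "cmp C a' (cmp C g m) = cmp C b' (cmp C g m)"
    have ah: "a' \<in> hom C (Cod C g) W" and bh: "b' \<in> hom C (Cod C g) W" using as1 as2 homD[OF gm] by auto
    have ag: "cmp C a' g \<in> hom C N W" and bg: "cmp C b' g \<in> hom C N W" using cat_comp[OF cat gh] ah bh by auto
    have e1: "cmp C (cmp C a' g) m = cmp C (cmp C b' g) m"
      using as cat_assoc[OF cat mh gh ah] cat_assoc[OF cat mh gh bh] by simp
    have zgr: "zero_arrow C (cmp C g r)" using cokernel_zero[OF g] .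
    have Cgr: "Cod C (cmp C g r) = Cod C g" "Dom C (cmp C g r) = Q" using cmpD[OF cat r gh] by auto
    have za: "zero_arrow C (cmp C (cmp C a' g) r)"
      using zero_comp_right[OF cat zgr, of a' W] ah Cgr cat_assoc[OF cat r gh ah] by simp
    have zb: "zero_arrow C (cmp C (cmp C b' g) r)"
      using zero_comp_right[OF cat zgr, of b' W] bh Cgr cat_assoc[OF cat r gh bh] by simp
    have e2: "cmp C (cmp C a' g) r = cmp C (cmp C b' g) r"
      using zero_unique[OF cat za zb] cmpD[OF cat r ag] cmpD[OF cat r bg] by simp
    have "cmp C a' g = cmp C b' g"
      using jointly_epic[OF a mc _ _ _ _ e1 e2] r cr ag bg DN by simp
    thus "a' = b'" using epicD[OF gep] ah bh by blast
  qed
  have gmm: "monic C (cmp C g m)" unfolding monic_def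
  proof (intro conjI allI impI)
    show "cmp C g m \<in> Arr C" using homD[OF gm] by simp
    fix V s t assume as1: "s \<in> hom C V (Dom C (cmp C g m))" and as2: "t \<in> hom C V (Dom C (cmp C g m))"
      and as: "cmp C (cmp C g m) s = cmp C (cmp C g m) t"
    have sh: "s \<in> hom C V (Dom C m)" and th: "t \<in> hom C V (Dom C m)" using as1 as2 homD[OF gm] by auto
    have ms: "cmp C m s \<in> hom C V N" and mt: "cmp C m t \<in> hom C V N" using cat_comp[OF cat _ mh] sh th by auto
    have e1: "cmp C g (cmp C m s) = cmp C g (cmp C m t)"
      using as cat_assoc[OF cat sh mh gh] cat_assoc[OF cat th mh gh] by simp
    have zcm: "zero_arrow C (cmp C c m)" using kernel_zero[OF k] .
    have Dcm: "Dom C (cmp C c m) = Dom C m" using cmpD[OF cat mh ch] by simp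
    have zs: "zero_arrow C (cmp C c (cmp C m s))"
      using zero_comp_left[OF cat zcm, of s V] sh Dcm cat_assoc[OF cat sh mh ch] by simp
    have zt: "zero_arrow C (cmp C c (cmp C m t))"
      using zero_comp_left[OF cat zcm, of t V] th Dcm cat_assoc[OF cat th mh ch] by simp
    have e2: "cmp C c (cmp C m s) = cmp C c (cmp C m t)"
      using zero_unique[OF cat zs zt] cmpD[OF cat ms ch] cmpD[OF cat mt ch] by simp
    have "cmp C m s = cmp C m t"
      using jointly_monic[OF a gk _ _ _ _ e1 e2] r ch cr ms mt homD[OF r] by simp
    thus "s = t" using monicD[OF kernel_monic[OF cat k]] sh th by blast
  qed
  obtain v where v: "v \<in> hom C (Cod C g) (Dom C m)" and vgm: "cmp C v (cmp C g m) = idm C (Dom C m)"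
    using mono_epi_iso[OF a gmm gmep] homD[OF gm] by auto
  have vg: "cmp C v g \<in> hom C N (Dom C m)" using cat_comp[OF cat gh v] .
  have "cmp C (cmp C v g) m = idm C (Dom C m)" using vgm cat_assoc[OF cat mh gh v] by simp
  thus ?thesis unfolding is_section_def using vg homD[OF mh] by (intro conjI bexI[of _ "cmp C v g"]) simp_all
qed

lemma split_cokernel_retraction:
  assumes a: "abelian C" and ch: "c \<in> hom C Q N" and r: "r \<in> hom C N Q" and cr: "cmp C r c = idm C Q"
    and k: "is_cokernel C c m"
  shows "is_retraction C m"
  using split_kernel_section[of "opc C" c N Q r m] assms by simp



lemma prod_factor_rickart:
  assumes a: "abelian C" and P: "is_product C I N P p" and NO: "\<forall>j \<in> I. N j \<in> Obj C" and i: "i \<in> I"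
    and sr: "strongly_rickart C M P"
  shows "strongly_rickart C M (N i)"
proof -
  have cat: "is_category C" using abelian_cat[OF a] .
  define q where "q j = (SOME z. z \<in> hom C (N i) (N j) \<and> (j = i \<longrightarrow> z = idm C (N i)))" for j
  have q: "\<forall>j \<in> I. q j \<in> hom C (N i) (N j) \<and> (j = i \<longrightarrow> q j = idm C (N i))"
  proof
    fix j assume j: "j \<in> I"
    have "\<exists>z. z \<in> hom C (N i) (N j) \<and> (j = i \<longrightarrow> z = idm C (N i))"
    proof (cases "j = i")
      case True thus ?thesis using cat_id[OF cat] NO i by auto
    next
      case False
      obtain z where "z \<in> hom C (N i) (N j)" using abelian_zero[OF a] NO i j by blast
      thus ?thesis using False by blast
    qed
    thus "q j \<in> hom C (N i) (N j) \<and> (j = i \<longrightarrow> q j = idm C (N i))" unfolding q_def by (rule someI_ex)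
  qed
  obtain s where s: "s \<in> hom C (N i) P" and ps: "\<forall>j\<in>I. cmp C (p j) s = q j"
    using prod_ex[OF P _, of "N i" q] q NO i by auto
  have psi: "cmp C (p i) s = idm C (N i)" using ps q i by auto
  have pi: "p i \<in> hom C P (N i)" using prod_proj[OF P i] .
  show ?thesis unfolding strongly_rickart_def
  proof (intro ballI allI impI)
    fix f k assume f: "f \<in> hom C M (N i)" and k: "is_kernel C f k"
    have g: "cmp C s f \<in> hom C M P" using cat_comp[OF cat f s] .
    have kh: "k \<in> hom C (Dom C k) M" using kernel_arr[OF k] homD[OF f] by simp
    have "is_kernel C (cmp C s f) k" unfolding is_kernel_def
    proof (intro conjI allI impI)
      show "cmp C s f \<in> Arr C" "k \<in> Arr C" "Cod C k = Dom C (cmp C s f)"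
        using homD[OF g] homD[OF kh] by auto
      have "zero_arrow C (cmp C s (cmp C f k))"
        using zero_comp_right[OF cat kernel_zero[OF k], of s P] cmpD[OF cat kh f] s by simp
      thus "zero_arrow C (cmp C (cmp C s f) k)" using cat_assoc[OF cat kh f s] by simp
    next
      fix h assume h: "h \<in> Arr C \<and> Cod C h = Dom C (cmp C s f) \<and> zero_arrow C (cmp C (cmp C s f) h)"
      have hh: "h \<in> hom C (Dom C h) M" using h homD[OF g] hom_self by metis
      have fh: "cmp C f h \<in> hom C (Dom C h) (N i)" using cat_comp[OF cat hh f] .
      have gh: "cmp C (cmp C s f) h \<in> hom C (Dom C h) P" using cat_comp[OF cat hh g] .
      have "cmp C f h = cmp C (cmp C (p i) s) (cmp C f h)" using psi cat_idl[OF cat fh] by simp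
      also have "\<dots> = cmp C (p i) (cmp C s (cmp C f h))" using cat_assoc[OF cat fh s pi] by simp
      also have "\<dots> = cmp C (p i) (cmp C (cmp C s f) h)" using cat_assoc[OF cat hh f s] by simp
      finally have "zero_arrow C (cmp C f h)"
        using zero_comp_right[OF cat conjunct2[OF conjunct2[OF h]], of "p i" "N i"] pi homD[OF gh] by simp
      thus "\<exists>!u. u \<in> hom C (Dom C h) (Dom C k) \<and> cmp C k u = h"
        using kernel_ex1[OF k] h homD[OF f] homD[OF hh] by simp
    qed
    thus "is_section C k \<and> fully_invariant C k" using sr g unfolding strongly_rickart_def by blast
  qed
qed

lemma coprod_factor_rickart:
  assumes a: "abelian C" and P: "is_coproduct C I N P p" and NO: "\<forall>j \<in> I. N j \<in> Obj C" and i: "i \<in> I"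
    and sr: "dual_strongly_rickart C P M"
  shows "dual_strongly_rickart C (N i) M"
  using prod_factor_rickart[of "opc C" I N P p i M] assms by simp



lemma prod_rickart:
  assumes a: "abelian C" and wd: "weak_duo C M" and ss: "SSIP C M" and P: "is_product C I N P p"
    and all: "\<forall>i \<in> I. strongly_rickart C M (N i)"
  shows "strongly_rickart C M P"
  unfolding strongly_rickart_def
proof (intro ballI allI impI)
  have cat: "is_category C" using abelian_cat[OF a] .
  fix f k assume f: "f \<in> hom C M P" and k: "is_kernel C f k"
  have kh: "k \<in> hom C (Dom C k) M" using kernel_arr[OF k] homD[OF f] by simp
  have km: "monic C k" using kernel_monic[OF cat k] .
  define K where "K i = (SOME k'. is_kernel C (cmp C (p i) f) k')" for i
  have fi: "\<And>i. i \<in> I \<Longrightarrow> cmp C (p i) f \<in> hom C M (N i)" using cat_comp[OF cat f prod_proj[OF P]] by simp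
  have Ki: "\<And>i. i \<in> I \<Longrightarrow> is_kernel C (cmp C (p i) f) (K i)"
    unfolding K_def using abelian_ker[OF a] fi homD by (metis someI_ex)
  have KM: "\<And>i. i \<in> I \<Longrightarrow> K i \<in> hom C (Dom C (K i)) M"
    using Ki kernel_arr fi homD by metis
  have KS: "\<forall>s \<in> K ` I. is_section C s \<and> Cod C s = M"
    using all Ki fi KM homD unfolding strongly_rickart_def by fastforce
  obtain d where di: "is_intersection C M (K ` I) d" and ds: "is_section C d"
    using ss KS unfolding SSIP_def by blast
  have dm: "monic C d" and Cd: "Cod C d = M"
    and dfac: "\<forall>s \<in> K ` I. \<exists>t \<in> hom C (Dom C d) (Dom C s). cmp C s t = d"
    and duniv: "\<forall>g. g \<in> Arr C \<and> Cod C g = M \<and> (\<forall>s \<in> K ` I. \<exists>t \<in> hom C (Dom C g) (Dom C s). cmp C s t = g) \<longrightarrow>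
        (\<exists>v \<in> hom C (Dom C g) (Dom C d). cmp C d v = g)"
    using di unfolding is_intersection_def by blast+
  have dh: "d \<in> hom C (Dom C d) M" using hom_self[OF monic_arr[OF dm]] Cd by simp
  have "\<forall>s \<in> K ` I. \<exists>t \<in> hom C (Dom C k) (Dom C s). cmp C s t = k"
  proof
    fix s assume "s \<in> K ` I"
    then obtain i where i: "i \<in> I" and si: "s = K i" by blast
    have "cmp C (cmp C (p i) f) k = cmp C (p i) (cmp C f k)" using cat_assoc[OF cat kh f prod_proj[OF P i]] by simp
    moreover have "zero_arrow C (cmp C (p i) (cmp C f k))"
      using zero_comp_right[OF cat kernel_zero[OF k], of "p i" "N i"] cmpD[OF cat kh f] prod_proj[OF P i] by simp
    ultimately have "zero_arrow C (cmp C (cmp C (p i) f) k)" by simp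
    thus "\<exists>t \<in> hom C (Dom C k) (Dom C s). cmp C s t = k"
      using kernel_factor[OF Ki[OF i], of k] si homD[OF kh] homD[OF fi[OF i]] by simp
  qed
  then obtain v where v: "v \<in> hom C (Dom C k) (Dom C d)" and dv: "cmp C d v = k"
    using duniv homD[OF kh] by blast
  have OD: "Dom C d \<in> Obj C" using cat_obj_hom[OF cat dh] by simp
  obtain z where z: "z \<in> hom C (Dom C d) P" and zz: "zero_arrow C z"
    using abelian_zero[OF a OD prod_obj[OF P]] by blast
  have fd: "cmp C f d \<in> hom C (Dom C d) P" using cat_comp[OF cat dh f] .
  have "\<forall>i \<in> I. cmp C (p i) (cmp C f d) = cmp C (p i) z"
  proof
    fix i assume i: "i \<in> I"
    obtain t where t: "t \<in> hom C (Dom C d) (Dom C (K i))" and Kt: "cmp C (K i) t = d"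
      using dfac i by blast
    have pi: "p i \<in> hom C P (N i)" using prod_proj[OF P i] .
    have "cmp C (p i) (cmp C f d) = cmp C (cmp C (p i) f) d" using cat_assoc[OF cat dh f pi] by simp
    also have "\<dots> = cmp C (cmp C (cmp C (p i) f) (K i)) t" using Kt cat_assoc[OF cat t KM[OF i] fi[OF i]] by simp
    finally have z1: "zero_arrow C (cmp C (p i) (cmp C f d))"
      using zero_comp_left[OF cat kernel_zero[OF Ki[OF i]], of t] t cmpD[OF cat KM[OF i] fi[OF i]] by simp
    have z2: "zero_arrow C (cmp C (p i) z)" using zero_comp_right[OF cat zz, of "p i"] pi homD[OF z] by simp
    show "cmp C (p i) (cmp C f d) = cmp C (p i) z"
      using zero_unique[OF cat z1 z2] cmpD[OF cat fd pi] cmpD[OF cat z pi] by simp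
  qed
  hence "cmp C f d = z" using prod_uniq[OF cat P OD fd z] by simp
  hence "zero_arrow C (cmp C f d)" using zz by simp
  then obtain w where w: "w \<in> hom C (Dom C d) (Dom C k)" and kw: "cmp C k w = d"
    using kernel_factor[OF k, of d] homD[OF dh] homD[OF f] by auto
  have wv: "cmp C w v \<in> hom C (Dom C k) (Dom C k)" using cat_comp[OF cat v w] .
  have OK: "Dom C k \<in> Obj C" using cat_obj_hom[OF cat kh] by simp
  have "cmp C k (cmp C w v) = cmp C k (idm C (Dom C k))"
    using cat_assoc[OF cat v w kh] kw dv cat_idr[OF cat kh] by simp
  hence wvid: "cmp C w v = idm C (Dom C k)" using monicD[OF km wv cat_id[OF cat OK]] by simp
  obtain d' where d': "d' \<in> hom C M (Dom C d)" and d'd: "cmp C d' d = idm C (Dom C d)"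
    using is_section_D[OF ds] Cd by auto
  have wd': "cmp C w d' \<in> hom C M (Dom C k)" using cat_comp[OF cat d' w] .
  have "cmp C (cmp C w d') k = cmp C w (cmp C d' (cmp C d v))" using cat_assoc[OF cat kh d' w] dv by simp
  also have "\<dots> = cmp C w (cmp C (cmp C d' d) v)" using cat_assoc[OF cat v dh d'] by simp
  also have "\<dots> = idm C (Dom C k)" using d'd cat_idl[OF cat v] wvid by simp
  finally have ksec: "is_section C k" unfolding is_section_def using wd' homD[OF kh]
    by (intro conjI bexI[of _ "cmp C w d'"]) simp_all
  moreover have "fully_invariant C k" using wd ksec homD[OF kh] unfolding weak_duo_def by blast
  ultimately show "is_section C k \<and> fully_invariant C k" by simp
qed



lemma cokernel_ex1: "is_cokernel C f k \<Longrightarrow> g \<in> Arr C \<Longrightarrow> Dom C g = Cod C f \<Longrightarrow> zero_arrow C (cmp C g f) \<Longrightarrow>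
   \<exists>!u. u \<in> hom C (Cod C k) (Cod C g) \<and> cmp C u k = g"
  using kernel_ex1[of "opc C" f k g] by simp

lemma coker_fc:
  assumes cat: "is_category C" and uc: "is_cokernel C u c" and fi: "fully_invariant C u"
  shows "fully_coinvariant C c"
  unfolding fully_coinvariant_def
proof (intro conjI ballI)
  show "epic C c" using cokernel_epic[OF cat uc] .
  fix h assume h: "h \<in> hom C (Dom C c) (Dom C c)"
  have ch: "c \<in> hom C (Cod C u) (Cod C c)" and uA: "u \<in> Arr C" using cokernel_arr[OF uc] by auto
  have uh: "u \<in> hom C (Dom C u) (Cod C u)" using hom_self[OF uA] .
  have h': "h \<in> hom C (Cod C u) (Cod C u)" using h homD[OF ch] by simp
  obtain \<alpha> where al: "\<alpha> \<in> hom C (Dom C u) (Dom C u)" and hu: "cmp C h u = cmp C u \<alpha>"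
    using fi h' unfolding fully_invariant_def by blast
  have chh: "cmp C c h \<in> hom C (Cod C u) (Cod C c)" using cat_comp[OF cat h' ch] .
  have "cmp C (cmp C c h) u = cmp C c (cmp C u \<alpha>)" using cat_assoc[OF cat uh h' ch] hu by simp
  also have "\<dots> = cmp C (cmp C c u) \<alpha>" using cat_assoc[OF cat al uh ch] by simp
  finally have "zero_arrow C (cmp C (cmp C c h) u)"
    using zero_comp_left[OF cat cokernel_zero[OF uc], of \<alpha>] al cmpD[OF cat uh ch] by simp
  then obtain \<gamma> where g1: "\<gamma> \<in> hom C (Cod C c) (Cod C (cmp C c h))" and g2: "cmp C \<gamma> c = cmp C c h"
    using cokernel_factor[OF uc, of "cmp C c h"] homD[OF chh] by auto
  show "\<exists>\<gamma> \<in> hom C (Cod C c) (Cod C c). cmp C c h = cmp C \<gamma> c"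
    using g1 g2 homD[OF chh] by (intro bexI[of _ \<gamma>]) simp_all
qed

lemma coprod_rickart:
  assumes a: "abelian C" and wd: "weak_duo C N" and ss: "SSSP C N" and S: "is_coproduct C I M S e"
    and all: "\<forall>i \<in> I. dual_strongly_rickart C (M i) N"
  shows "dual_strongly_rickart C S N"
  unfolding dual_strongly_rickart_def
proof (intro ballI allI impI)
  have cat: "is_category C" using abelian_cat[OF a] .
  fix f c assume f: "f \<in> hom C S N" and fc: "is_cokernel C f c"
  have ch: "c \<in> hom C N (Cod C c)" using cokernel_arr[OF fc] homD[OF f] by simp
  have fi: "\<And>i. i \<in> I \<Longrightarrow> cmp C f (e i) \<in> hom C (M i) N" using cat_comp[OF cat coprod_inj[OF S] f] by simp
  define Ci where "Ci i = (SOME c'. is_cokernel C (cmp C f (e i)) c')" for i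
  have Cic: "\<And>i. i \<in> I \<Longrightarrow> is_cokernel C (cmp C f (e i)) (Ci i)"
    unfolding Ci_def using abelian_coker[OF a] fi homD by (metis someI_ex)
  have Cih: "\<And>i. i \<in> I \<Longrightarrow> Ci i \<in> hom C N (Cod C (Ci i))"
    using Cic cokernel_arr fi homD by metis
  define Ki where "Ki i = (SOME m'. is_kernel C (Ci i) m')" for i
  have Kik: "\<And>i. i \<in> I \<Longrightarrow> is_kernel C (Ci i) (Ki i)"
    unfolding Ki_def using abelian_ker[OF a] Cih homD by (metis someI_ex)
  have Kih: "\<And>i. i \<in> I \<Longrightarrow> Ki i \<in> hom C (Dom C (Ki i)) N"
    using Kik kernel_arr Cih homD by metis
  have KS: "\<forall>s \<in> Ki ` I. is_section C s \<and> Cod C s = N"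
  proof
    fix s assume "s \<in> Ki ` I"
    then obtain i where i: "i \<in> I" and si: "s = Ki i" by blast
    have "is_retraction C (Ci i)" using all i fi[OF i] Cic[OF i] unfolding dual_strongly_rickart_def by blast
    then obtain r where r: "r \<in> hom C (Cod C (Ci i)) N" and cr: "cmp C (Ci i) r = idm C (Cod C (Ci i))"
      unfolding is_retraction_def using homD[OF Cih[OF i]] by auto
    have "is_section C (Ki i)" using split_kernel_section[OF a Cih[OF i] r cr Kik[OF i]] .
    thus "is_section C s \<and> Cod C s = N" using si homD[OF Kih[OF i]] by simp
  qed
  obtain u where us: "is_sum C N (Ki ` I) u" and usec: "is_section C u"
    using ss KS unfolding SSSP_def by blast
  have um: "monic C u" and Cu: "Cod C u = N"
    and ufac: "\<forall>s \<in> Ki ` I. \<exists>t \<in> hom C (Dom C s) (Dom C u). cmp C u t = s"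
    and uuniv: "\<forall>m. monic C m \<and> Cod C m = N \<and> (\<forall>s \<in> Ki ` I. \<exists>t \<in> hom C (Dom C s) (Dom C m). cmp C m t = s) \<longrightarrow>
        (\<exists>v \<in> hom C (Dom C u) (Dom C m). cmp C m v = u)"
    using us unfolding is_sum_def by blast+
  have uh: "u \<in> hom C (Dom C u) N" using hom_self[OF monic_arr[OF um]] Cu by simp
  obtain kc where kc: "is_kernel C c kc" using abelian_ker[OF a] homD[OF ch] by blast
  have kch: "kc \<in> hom C (Dom C kc) N" using kernel_arr[OF kc] homD[OF ch] by simp
  have "\<forall>s \<in> Ki ` I. \<exists>t \<in> hom C (Dom C s) (Dom C kc). cmp C kc t = s"
  proof
    fix s assume "s \<in> Ki ` I"
    then obtain i where i: "i \<in> I" and si: "s = Ki i" by blast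
    have ei: "e i \<in> hom C (M i) S" using coprod_inj[OF S i] .
    have "cmp C c (cmp C f (e i)) = cmp C (cmp C c f) (e i)" using cat_assoc[OF cat ei f ch] by simp
    hence "zero_arrow C (cmp C c (cmp C f (e i)))"
      using zero_comp_left[OF cat cokernel_zero[OF fc], of "e i"] ei cmpD[OF cat f ch] by simp
    then obtain w where w: "w \<in> hom C (Cod C (Ci i)) (Cod C c)" and wc: "cmp C w (Ci i) = c"
      using cokernel_factor[OF Cic[OF i], of c] homD[OF ch] homD[OF fi[OF i]] by auto
    have "cmp C c (Ki i) = cmp C w (cmp C (Ci i) (Ki i))" using wc cat_assoc[OF cat Kih[OF i] Cih[OF i] w] by simp
    hence "zero_arrow C (cmp C c (Ki i))"
      using zero_comp_right[OF cat kernel_zero[OF Kik[OF i]], of w] w cmpD[OF cat Kih[OF i] Cih[OF i]] by simp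
    thus "\<exists>t \<in> hom C (Dom C s) (Dom C kc). cmp C kc t = s"
      using kernel_factor[OF kc, of "Ki i"] si homD[OF Kih[OF i]] homD[OF ch] by simp
  qed
  then obtain v where v: "v \<in> hom C (Dom C u) (Dom C kc)" and kv: "cmp C kc v = u"
    using uuniv kernel_monic[OF cat kc] homD[OF kch] by blast
  have "cmp C c u = cmp C (cmp C c kc) v" using kv cat_assoc[OF cat v kch ch] by simp
  hence zcu: "zero_arrow C (cmp C c u)"
    using zero_comp_left[OF cat kernel_zero[OF kc], of v] v cmpD[OF cat kch ch] by simp
  have uc: "is_cokernel C u c" unfolding is_cokernel_def
  proof (intro conjI allI impI)
    show "u \<in> Arr C" "c \<in> Arr C" "Dom C c = Cod C u" "zero_arrow C (cmp C c u)"
      using homD[OF uh] homD[OF ch] zcu by auto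
    fix g assume g: "g \<in> Arr C \<and> Dom C g = Cod C u \<and> zero_arrow C (cmp C g u)"
    have gh: "g \<in> hom C N (Cod C g)" using g hom_self Cu by metis
    have OS: "Cod C g \<in> Obj C" "S \<in> Obj C" using cat_obj_hom[OF cat gh] cat_obj_hom[OF cat f] by auto
    obtain z where z: "z \<in> hom C S (Cod C g)" and zz: "zero_arrow C z" using abelian_zero[OF a OS(2) OS(1)] by blast
    have gf: "cmp C g f \<in> hom C S (Cod C g)" using cat_comp[OF cat f gh] .
    have "\<forall>i \<in> I. cmp C (cmp C g f) (e i) = cmp C z (e i)"
    proof
      fix i assume i: "i \<in> I"
      have ei: "e i \<in> hom C (M i) S" using coprod_inj[OF S i] .
      obtain s where s: "s \<in> hom C (M i) (Dom C (Ki i))" and Ks: "cmp C (Ki i) s = cmp C f (e i)"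
        using kernel_factor[OF Kik[OF i], of "cmp C f (e i)"] cokernel_zero[OF Cic[OF i]]
          homD[OF fi[OF i]] homD[OF Cih[OF i]] by auto
      obtain t where t: "t \<in> hom C (Dom C (Ki i)) (Dom C u)" and ut: "cmp C u t = Ki i"
        using ufac i by blast
      have ts: "cmp C t s \<in> hom C (M i) (Dom C u)" using cat_comp[OF cat s t] .
      have "cmp C (cmp C g f) (e i) = cmp C g (cmp C f (e i))" using cat_assoc[OF cat ei f gh] by simp
      also have "\<dots> = cmp C g (cmp C u (cmp C t s))" using Ks ut cat_assoc[OF cat s t uh] by simp
      also have "\<dots> = cmp C (cmp C g u) (cmp C t s)" using cat_assoc[OF cat ts uh gh] by simp
      finally have z1: "zero_arrow C (cmp C (cmp C g f) (e i))"
        using zero_comp_left[OF cat conjunct2[OF conjunct2[OF g]], of "cmp C t s"] ts cmpD[OF cat uh gh] by simp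
      have z2: "zero_arrow C (cmp C z (e i))" using zero_comp_left[OF cat zz, of "e i"] ei homD[OF z] by simp
      show "cmp C (cmp C g f) (e i) = cmp C z (e i)"
        using zero_unique[OF cat z1 z2] cmpD[OF cat ei gf] cmpD[OF cat ei z] by simp
    qed
    hence "cmp C g f = z" using coprod_uniq[OF cat S OS(1) gf z] by simp
    hence "zero_arrow C (cmp C g f)" using zz by simp
    thus "\<exists>!x. x \<in> hom C (Cod C c) (Cod C g) \<and> cmp C x c = g"
      using cokernel_ex1[OF fc, of g] g homD[OF f] Cu by simp
  qed
  obtain u' where u': "u' \<in> hom C N (Dom C u)" and u'u: "cmp C u' u = idm C (Dom C u)"
    using is_section_D[OF usec] Cu by auto
  have "is_retraction C c" using split_cokernel_retraction[OF a uh u' u'u uc] .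
  moreover have "fully_coinvariant C c"
    using coker_fc[OF cat uc] wd usec Cu unfolding weak_duo_def by blast
  ultimately show "is_retraction C c \<and> fully_coinvariant C c" by simp
qed

theorem theorem3p5:
  fixes C :: "('o, 'm) category"
  assumes "abelian C"
  shows
    "(\<forall>(M::'o) (I::'i set) (N::'i \<Rightarrow> 'o) P p.
        weak_duo C M \<and> SSIP C M \<and> (\<forall>i \<in> I. N i \<in> Obj C) \<and> is_product C I N P p \<longrightarrow>
        (strongly_rickart C M P \<longleftrightarrow> (\<forall>i \<in> I. strongly_rickart C M (N i))))
     \<and>
     (\<forall>(I::'j set) (M::'j \<Rightarrow> 'o) S e (N::'o).
        (\<forall>i \<in> I. M i \<in> Obj C) \<and> is_coproduct C I M S e \<and> weak_duo C N \<and> SSSP C N \<longrightarrow>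
        (dual_strongly_rickart C S N \<longleftrightarrow> (\<forall>i \<in> I. dual_strongly_rickart C (M i) N)))"
proof (intro conjI allI impI)
  fix M :: 'o and I :: "'i set" and N :: "'i \<Rightarrow> 'o" and P p
  assume h: "weak_duo C M \<and> SSIP C M \<and> (\<forall>i \<in> I. N i \<in> Obj C) \<and> is_product C I N P p"
  show "strongly_rickart C M P \<longleftrightarrow> (\<forall>i \<in> I. strongly_rickart C M (N i))"
  proof
    assume "strongly_rickart C M P"
    thus "\<forall>i \<in> I. strongly_rickart C M (N i)" using prod_factor_rickart[OF assms, of I N P p] h by simp
  next
    assume "\<forall>i \<in> I. strongly_rickart C M (N i)"
    thus "strongly_rickart C M P" using prod_rickart[OF assms, of M I N P p] h by simp
  qed
next
  fix I :: "'j set" and M :: "'j \<Rightarrow> 'o" and S e and N :: 'o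
  assume h: "(\<forall>i \<in> I. M i \<in> Obj C) \<and> is_coproduct C I M S e \<and> weak_duo C N \<and> SSSP C N"
  show "dual_strongly_rickart C S N \<longleftrightarrow> (\<forall>i \<in> I. dual_strongly_rickart C (M i) N)"
  proof
    assume "dual_strongly_rickart C S N"
    thus "\<forall>i \<in> I. dual_strongly_rickart C (M i) N" using coprod_factor_rickart[OF assms, of I M S e] h by simp
  next
    assume "\<forall>i \<in> I. dual_strongly_rickart C (M i) N"
    thus "dual_strongly_rickart C S N" using coprod_rickart[OF assms, of N I M S e] h by simp
  qed
qed

end
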